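(* There is a representation (unital $\mathbb C$-algebra homomorphism) $\overline{\mathcal H}\to\operatorname{Mat}_{2D}(\mathbb C)$ such that $\mathcal T\mapsto\mathfrak t$, $\mathcal T'\mapsto\mathfrak t'$, $\mathcal U\mapsto\mathfrak u$, $\mathcal U'\mapsto\mathfrak u'$, $\mathcal X\mapsto\mathfrak x$.
   Context: Let $q$ be a prime power, $D\ge3$ an integer and $e\in\{0,\tfrac12,1,\tfrac32,2\}$ (with $q$ a square when $e\in\{\tfrac12,\tfrac32\}$). Let $\kappa=q^{-e/2}$ and $\kappa'=\sqrt{-1}\,q^{-D/2}$. The nil-DAHA $\overline{\mathcal H}=\overline{\mathcal H}(\kappa,\kappa')$ is the $\mathbb C$-algebra generated by $\mathcal T^{\pm1},\mathcal U,\mathcal X^{\pm1}$ (with $\mathcal T\mathcal T^{-1}=\mathcal T^{-1}\mathcal T=1$, $\mathcal X\mathcal X^{-1}=\mathcal X^{-1}\mathcal X=1$) subject to $(\mathcal T-\kappa)(\mathcal T+\kappa^{-1})=0$, $(\mathcal T'-\kappa')(\mathcal T'+\kappa'^{-1})=0$, $\mathcal U(\mathcal U+1)=0$, $\mathcal U'^2=0$, where $\mathcal T'=\mathcal X\mathcal T^{-1}$ and $\mathcal U'=\mathcal X^{-1}(\mathcal U+1)$. Define $2\times2$ matrices: for $0\le i\le D-1$, $t(i)=\begin{pmatrix} q^{-e/2}-q^{e/2} & q^{e/2}\\ q^{-e/2}&0\end{pmatrix}$, $u'(i)=\begin{pmatrix}0&0\\ -\sqrt{-1}\,q^{(D-e)/2-i}&0\end{pmatrix}$;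 for $1\le i\le D-1$, $t'(i)=\sqrt{-1}\begin{pmatrix} q^{-D/2}(q^D-q^i+1) & q^{D/2}(q^{i-D}-1)\\ q^{-D/2}(1-q^i) & q^{i-D/2}\end{pmatrix}$, $u(i)=\begin{pmatrix}-1&1-q^{D-i}\\0&0\end{pmatrix}$; and $1\times1$ matrices $t'(0)=t'(D)=(\sqrt{-1}\,q^{-D/2})$, $u(0)=(0)$, $u(D)=(-1)$. Let $\mathfrak t=\operatorname{blockdiag}(t(0),\dots,t(D-1))$, $\mathfrak t'=\operatorname{blockdiag}(t'(0),\dots,t'(D))$, $\mathfrak u=\operatorname{blockdiag}(u(0),\dots,u(D))$, $\mathfrak u'=\operatorname{blockdiag}(u'(0),\dots,u'(D-1))$, all $2D\times2D$, and $\mathfrak x=\mathfrak t'\mathfrak t$. *)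

theory Defs
  imports Complex_Main "Jordan_Normal_Form.Matrix"
begin

text \<open>The nil-DAHA with parameters k, k' is presented by generators T, T^-1, U, X, X^-1
and the defining relations listed in the paper.  By the universal property of an algebra
given by generators and relations, a unital C-algebra homomorphism from it into the
n x n complex matrices is the same thing as an assignment of n x n matrices to the
generators T, T^-1, U, X, X^-1 that satisfies all defining relations.\<close>

definition nilDAHA_rep ::
  "nat \<Rightarrow> complex \<Rightarrow> complex \<Rightarrow> complex mat \<Rightarrow> complex mat \<Rightarrow> complex mat
     \<Rightarrow> complex mat \<Rightarrow> complex mat \<Rightarrow> bool" where
  "nilDAHA_rep n k k' T Ti U X Xi \<longleftrightarrow>
     T \<in> carrier_mat n n \<and> Ti \<in> carrier_mat n n \<and> U \<in> carrier_mat n n \<and>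
     X \<in> carrier_mat n n \<and> Xi \<in> carrier_mat n n \<and>
     T * Ti = 1\<^sub>m n \<and> Ti * T = 1\<^sub>m n \<and>
     X * Xi = 1\<^sub>m n \<and> Xi * X = 1\<^sub>m n \<and>
     (T - k \<cdot>\<^sub>m 1\<^sub>m n) * (T + inverse k \<cdot>\<^sub>m 1\<^sub>m n) = 0\<^sub>m n n \<and>
     (X * Ti - k' \<cdot>\<^sub>m 1\<^sub>m n) * (X * Ti + inverse k' \<cdot>\<^sub>m 1\<^sub>m n) = 0\<^sub>m n n \<and>
     U * (U + 1\<^sub>m n) = 0\<^sub>m n n \<and>
     (Xi * (U + 1\<^sub>m n)) * (Xi * (U + 1\<^sub>m n)) = 0\<^sub>m n n"

definition rep_T' :: "complex mat \<Rightarrow> complex mat \<Rightarrow> complex mat" where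
  "rep_T' X Ti = X * Ti"
definition rep_U' :: "nat \<Rightarrow> complex mat \<Rightarrow> complex mat \<Rightarrow> complex mat" where
  "rep_U' n Xi U = Xi * (U + 1\<^sub>m n)"

definition blockdiag_even :: "nat \<Rightarrow> (nat \<Rightarrow> nat \<Rightarrow> nat \<Rightarrow> complex) \<Rightarrow> complex mat" where
  "blockdiag_even D f = mat (2*D) (2*D)
     (\<lambda>(r,c). if r div 2 = c div 2 then f (r div 2) (r mod 2) (c mod 2) else 0)"

text \<open>Block diagonal 2D x 2D matrix with a 1 x 1 block (entry f0) at position 0,
2 x 2 blocks f i (1 \<le> i \<le> D-1) occupying rows/columns 2i-1, 2i, and a 1 x 1 block
(entry fD) at position 2D-1.\<close>
definition blockdiag_odd ::
  "nat \<Rightarrow> complex \<Rightarrow> (nat \<Rightarrow> nat \<Rightarrow> nat \<Rightarrow> complex) \<Rightarrow> complex \<Rightarrow> complex mat" where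
  "blockdiag_odd D f0 f fD = mat (2*D) (2*D)
     (\<lambda>(r,c). if (r+1) div 2 = (c+1) div 2 then
        (let i = (r+1) div 2 in
           if i = 0 then f0 else if i = D then fD else f i ((r+1) mod 2) ((c+1) mod 2))
      else 0)"

definition qp :: "nat \<Rightarrow> real \<Rightarrow> complex" where
  "qp q a = complex_of_real (real q powr a)"

definition entry2 :: "complex \<Rightarrow> complex \<Rightarrow> complex \<Rightarrow> complex \<Rightarrow> nat \<Rightarrow> nat \<Rightarrow> complex" where
  "entry2 m00 m01 m10 m11 a b =
     (if a = 0 then (if b = 0 then m00 else m01) else (if b = 0 then m10 else m11))"

definition t_blk :: "nat \<Rightarrow> real \<Rightarrow> nat \<Rightarrow> nat \<Rightarrow> nat \<Rightarrow> complex" where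
  "t_blk q e i = entry2 (qp q (-e/2) - qp q (e/2)) (qp q (e/2)) (qp q (-e/2)) 0"

definition u'_blk :: "nat \<Rightarrow> nat \<Rightarrow> real \<Rightarrow> nat \<Rightarrow> nat \<Rightarrow> nat \<Rightarrow> complex" where
  "u'_blk q D e i = entry2 0 0 (- \<i> * qp q ((real D - e)/2 - real i)) 0"

definition t'_blk :: "nat \<Rightarrow> nat \<Rightarrow> nat \<Rightarrow> nat \<Rightarrow> nat \<Rightarrow> complex" where
  "t'_blk q D i = (\<lambda>a b. \<i> * entry2
      (qp q (- real D/2) * (of_nat q ^ D - of_nat q ^ i + 1))
      (qp q (real D/2) * (qp q (real i - real D) - 1))
      (qp q (- real D/2) * (1 - of_nat q ^ i))
      (qp q (real i - real D/2)) a b)"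

definition u_blk :: "nat \<Rightarrow> nat \<Rightarrow> nat \<Rightarrow> nat \<Rightarrow> nat \<Rightarrow> complex" where
  "u_blk q D i = entry2 (-1) (1 - of_nat q ^ (D - i)) 0 0"

definition frak_t :: "nat \<Rightarrow> nat \<Rightarrow> real \<Rightarrow> complex mat" where
  "frak_t q D e = blockdiag_even D (t_blk q e)"

definition frak_u' :: "nat \<Rightarrow> nat \<Rightarrow> real \<Rightarrow> complex mat" where
  "frak_u' q D e = blockdiag_even D (u'_blk q D e)"

definition frak_t' :: "nat \<Rightarrow> nat \<Rightarrow> complex mat" where
  "frak_t' q D = blockdiag_odd D (\<i> * qp q (- real D/2)) (t'_blk q D) (\<i> * qp q (- real D/2))"

definition frak_u :: "nat \<Rightarrow> nat \<Rightarrow> complex mat" where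
  "frak_u q D = blockdiag_odd D 0 (u_blk q D) (-1)"

definition frak_x :: "nat \<Rightarrow> nat \<Rightarrow> real \<Rightarrow> complex mat" where
  "frak_x q D e = frak_t' q D * frak_t q D e"

definition prime_power :: "nat \<Rightarrow> bool" where
  "prime_power q \<longleftrightarrow> (\<exists>p k. prime p \<and> k \<ge> 1 \<and> q = p ^ k)"

end

theory Submission
  imports Defs
begin

lemma gen_mult:
  fixes F G :: "nat \<Rightarrow> nat \<Rightarrow> complex"
  shows "mat n n (\<lambda>(r,c). if \<beta> r = (\<beta> c :: nat) then F r c else 0) *
         mat n n (\<lambda>(r,c). if \<beta> r = \<beta> c then G r c else 0) =
         mat n n (\<lambda>(r,c). if \<beta> r = \<beta> c then (\<Sum>k\<in>{k. k < n \<and> \<beta> k = \<beta> r}. F r k * G k c) else 0)"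
proof (rule eq_matI)
  fix r c assume rc: "r < dim_row (mat n n (\<lambda>(r,c). if \<beta> r = \<beta> c then (\<Sum>k\<in>{k. k < n \<and> \<beta> k = \<beta> r}. F r k * G k c) else 0))"
     "c < dim_col (mat n n (\<lambda>(r,c). if \<beta> r = \<beta> c then (\<Sum>k\<in>{k. k < n \<and> \<beta> k = \<beta> r}. F r k * G k c) else 0))"
  hence r: "r < n" and c: "c < n" by auto
  have "(mat n n (\<lambda>(r,c). if \<beta> r = (\<beta> c :: nat) then F r c else 0) *
         mat n n (\<lambda>(r,c). if \<beta> r = \<beta> c then G r c else 0)) $$ (r,c)
     = (\<Sum>k\<in>{0..<n}. (if \<beta> r = \<beta> k then F r k else 0) * (if \<beta> k = \<beta> c then G k c else 0))"
    using r c by (simp add: scalar_prod_def row_def col_def)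
  also have "\<dots> = (\<Sum>k\<in>{k. k < n \<and> \<beta> k = \<beta> r}. (if \<beta> r = \<beta> k then F r k else 0) * (if \<beta> k = \<beta> c then G k c else 0))"
    by (rule sum.mono_neutral_right) auto
  also have "\<dots> = (if \<beta> r = \<beta> c then (\<Sum>k\<in>{k. k < n \<and> \<beta> k = \<beta> r}. F r k * G k c) else 0)"
    by (auto intro: sum.cong)
  finally show "(mat n n (\<lambda>(r,c). if \<beta> r = (\<beta> c :: nat) then F r c else 0) *
         mat n n (\<lambda>(r,c). if \<beta> r = \<beta> c then G r c else 0)) $$ (r,c) =
        mat n n (\<lambda>(r,c). if \<beta> r = \<beta> c then (\<Sum>k\<in>{k. k < n \<and> \<beta> k = \<beta> r}. F r k * G k c) else 0) $$ (r,c)"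
    using r c by simp
qed auto

lemma bde_as: "blockdiag_even D f = mat (2*D) (2*D) (\<lambda>(r,c). if r div 2 = c div 2 then f (r div 2) (r mod 2) (c mod 2) else 0)"
  by (simp add: blockdiag_even_def)

lemma set_even: "(r::nat) < 2*D \<Longrightarrow> {k. k < 2*D \<and> k div 2 = r div 2} = {2*(r div 2), 2*(r div 2)+1}"
  by (auto; presburger)

lemma bde_mult: "blockdiag_even D f * blockdiag_even D g =
   blockdiag_even D (\<lambda>i a b. f i a 0 * g i 0 b + f i a 1 * g i 1 b)"
proof -
  have "blockdiag_even D f * blockdiag_even D g = mat (2*D) (2*D) (\<lambda>(r,c). if r div 2 = c div 2 then
     (\<Sum>k\<in>{k. k < 2*D \<and> k div 2 = r div 2}. f (r div 2) (r mod 2) (k mod 2) * g (k div 2) (k mod 2) (c mod 2)) else 0)"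
    unfolding bde_as
    using gen_mult[of "2*D" "\<lambda>r. r div 2" "\<lambda>r c. f (r div 2) (r mod 2) (c mod 2)" "\<lambda>r c. g (r div 2) (r mod 2) (c mod 2)"]
    by simp
  also have "\<dots> = blockdiag_even D (\<lambda>i a b. f i a 0 * g i 0 b + f i a 1 * g i 1 b)"
    unfolding bde_as
    by (rule cong_mat) (auto simp: set_even)
  finally show ?thesis .
qed

lemma bdo_as: "blockdiag_odd D f0 f fD = mat (2*D) (2*D) (\<lambda>(r,c). if (r+1) div 2 = (c+1) div 2 then
   (if (r+1) div 2 = 0 then f0 else if (r+1) div 2 = D then fD else f ((r+1) div 2) ((r+1) mod 2) ((c+1) mod 2)) else 0)"
  unfolding blockdiag_odd_def Let_def by simp

lemma set_odd0: "(r::nat) < 2*D \<Longrightarrow> (r+1) div 2 = 0 \<Longrightarrow> {k. k < 2*D \<and> (k+1) div 2 = (r+1) div 2} = {0}"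
  by (auto; presburger)
lemma set_oddD: "(r::nat) < 2*D \<Longrightarrow> (r+1) div 2 = D \<Longrightarrow> {k. k < 2*D \<and> (k+1) div 2 = (r+1) div 2} = {2*D-1}"
  by (auto; presburger)
lemma set_odd: "(r::nat) < 2*D \<Longrightarrow> (r+1) div 2 \<noteq> 0 \<Longrightarrow> (r+1) div 2 \<noteq> D \<Longrightarrow>
   {k. k < 2*D \<and> (k+1) div 2 = (r+1) div 2} = {2*((r+1) div 2) - 1, 2*((r+1) div 2)}"
  by (auto; presburger)

lemma bdo_mult: assumes "D \<ge> 2" shows "blockdiag_odd D f0 f fD * blockdiag_odd D g0 g gD =
   blockdiag_odd D (f0*g0) (\<lambda>i a b. f i a 0 * g i 0 b + f i a 1 * g i 1 b) (fD * gD)"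
proof -
  let ?F = "\<lambda>r c. (if (r+1) div 2 = 0 then f0 else if (r+1) div 2 = D then fD else f ((r+1) div 2) ((r+1) mod 2) ((c+1) mod 2))"
  let ?G = "\<lambda>r c. (if (r+1) div 2 = 0 then g0 else if (r+1) div 2 = D then gD else g ((r+1) div 2) ((r+1) mod 2) ((c+1) mod 2))"
  have "blockdiag_odd D f0 f fD * blockdiag_odd D g0 g gD = mat (2*D) (2*D) (\<lambda>(r,c). if (r+1) div 2 = (c+1) div 2 then
     (\<Sum>k\<in>{k. k < 2*D \<and> (k+1) div 2 = (r+1) div 2}. ?F r k * ?G k c) else 0)"
    unfolding bdo_as
    using gen_mult[of "2*D" "\<lambda>r. (r+1) div 2" ?F ?G]
    by simp
  also have "\<dots> = blockdiag_odd D (f0*g0) (\<lambda>i a b. f i a 0 * g i 0 b + f i a 1 * g i 1 b) (fD * gD)"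
    unfolding bdo_as
  proof (rule cong_mat)
    fix r c assume r: "r < 2*D" and c: "c < 2*D"
    consider "(r+1) div 2 = 0" | "(r+1) div 2 = D" | "(r+1) div 2 \<noteq> 0 \<and> (r+1) div 2 \<noteq> D" by blast
    then show "(case (r,c) of (r,c) \<Rightarrow> if (r+1) div 2 = (c+1) div 2 then
     (\<Sum>k\<in>{k. k < 2*D \<and> (k+1) div 2 = (r+1) div 2}. ?F r k * ?G k c) else 0) =
     (case (r,c) of (r,c) \<Rightarrow> if (r+1) div 2 = (c+1) div 2 then
   (if (r+1) div 2 = 0 then f0*g0 else if (r+1) div 2 = D then fD*gD else f ((r+1) div 2) ((r+1) mod 2) 0 * g ((r+1) div 2) 0 ((c+1) mod 2) + f ((r+1) div 2) ((r+1) mod 2) 1 * g ((r+1) div 2) 1 ((c+1) mod 2)) else 0)"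
    proof cases
      case 1
      have S: "{k. k < 2*D \<and> (k+1) div 2 = (r+1) div 2} = {0}" using set_odd0[OF r 1] .
      show ?thesis unfolding prod.case S using 1 by simp
    next
      case 2 
      have "(2*D-1+1) div 2 = D" using assms by simp
      have S: "{k. k < 2*D \<and> (k+1) div 2 = (r+1) div 2} = {2*D-1}" using set_oddD[OF r 2] .
      show ?thesis unfolding prod.case S using 2 assms \<open>(2*D-1+1) div 2 = D\<close> by simp
    next
      case 3
      define j where "j = (r+1) div 2"
      have j1: "j \<ge> 1" and jD: "j < D" using 3 r unfolding j_def by auto
      have e1: "(2*j - 1 + 1) div 2 = j" "(2*j - 1 + 1) mod 2 = 0" "(2*j+1) div 2 = j" "(2*j+1) mod 2 = 1" using j1 by auto
      have ne: "2*j - 1 \<noteq> 2*j" using j1 by auto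
      have S: "{k. k < 2*D \<and> (k+1) div 2 = (r+1) div 2} = {2*j-1, 2*j}" using set_odd[OF r] 3 unfolding j_def by blast
      show ?thesis unfolding prod.case S unfolding j_def[symmetric] using 3 j1 jD e1 ne unfolding j_def[symmetric] by simp
    qed
  qed auto
  finally show ?thesis .
qed

lemma bde_carrier: "blockdiag_even D f \<in> carrier_mat (2*D) (2*D)"
  by (simp add: blockdiag_even_def)
lemma bdo_carrier: "blockdiag_odd D f0 f fD \<in> carrier_mat (2*D) (2*D)"
  by (simp add: blockdiag_odd_def)

lemma bde_add: "blockdiag_even D f + blockdiag_even D g = blockdiag_even D (\<lambda>i a b. f i a b + g i a b)"
  by (rule eq_matI) (auto simp: blockdiag_even_def)
lemma bde_minus: "blockdiag_even D f - blockdiag_even D g = blockdiag_even D (\<lambda>i a b. f i a b - g i a b)"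
  by (rule eq_matI) (auto simp: blockdiag_even_def)
lemma bde_smult: "k \<cdot>\<^sub>m blockdiag_even D f = blockdiag_even D (\<lambda>i a b. k * f i a b)"
  by (rule eq_matI) (auto simp: blockdiag_even_def)
lemma bdo_add: "blockdiag_odd D f0 f fD + blockdiag_odd D g0 g gD = blockdiag_odd D (f0+g0) (\<lambda>i a b. f i a b + g i a b) (fD+gD)"
  by (rule eq_matI) (auto simp: blockdiag_odd_def Let_def)
lemma bdo_minus: "blockdiag_odd D f0 f fD - blockdiag_odd D g0 g gD = blockdiag_odd D (f0-g0) (\<lambda>i a b. f i a b - g i a b) (fD-gD)"
  by (rule eq_matI) (auto simp: blockdiag_odd_def Let_def)
lemma bdo_smult: "k \<cdot>\<^sub>m blockdiag_odd D f0 f fD = blockdiag_odd D (k*f0) (\<lambda>i a b. k * f i a b) (k*fD)"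
  by (rule eq_matI) (auto simp: blockdiag_odd_def Let_def)

lemma dm_eq: "(x::nat) div 2 = y div 2 \<Longrightarrow> x mod 2 = y mod 2 \<Longrightarrow> x = y"
  by (metis div_mult_mod_eq)
lemma bde_one: "1\<^sub>m (2*D) = blockdiag_even D (\<lambda>i a b. if a = b then 1 else 0)"
  by (rule eq_matI) (auto simp: blockdiag_even_def dest: dm_eq)
lemma bde_zero: "0\<^sub>m (2*D) (2*D) = blockdiag_even D (\<lambda>i a b. 0)"
  by (rule eq_matI) (auto simp: blockdiag_even_def)
lemma bdo_zero: "0\<^sub>m (2*D) (2*D) = blockdiag_odd D 0 (\<lambda>i a b. 0) 0"
  by (rule eq_matI) (auto simp: blockdiag_odd_def Let_def)
lemma sdiv0: "Suc (r::nat) div 2 = 0 \<Longrightarrow> r = 0" by presburger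
lemma sdivD: "(r::nat) < 2*D \<Longrightarrow> Suc r div 2 = D \<Longrightarrow> r = 2*D-1" by presburger

lemma bdo_one: "1\<^sub>m (2*D) = blockdiag_odd D 1 (\<lambda>i a b. if a = b then 1 else 0) 1"
proof (rule eq_matI)
  fix r c assume "r < dim_row (blockdiag_odd D 1 (\<lambda>i a b. if a = b then 1 else 0) 1)" "c < dim_col (blockdiag_odd D 1 (\<lambda>i a b. if a = b then (1::complex) else 0) 1)"
  hence r: "r < 2*D" and c: "c < 2*D" by (auto simp: blockdiag_odd_def)
  show "1\<^sub>m (2*D) $$ (r,c) = blockdiag_odd D 1 (\<lambda>i a b. if a = b then 1 else 0) 1 $$ (r,c)"
    using r c sdiv0[of r] sdiv0[of c] sdivD[OF r] sdivD[OF c] dm_eq[of "Suc r" "Suc c"]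
    by (auto simp: blockdiag_odd_def Let_def)
qed (auto simp: blockdiag_odd_def)

lemma bde_cong: "(\<And>i a b. i < D \<Longrightarrow> a < 2 \<Longrightarrow> b < 2 \<Longrightarrow> f i a b = g i a b) \<Longrightarrow>
   blockdiag_even D f = blockdiag_even D g"
  unfolding blockdiag_even_def by (rule cong_mat) auto
lemma bdo_cong: "f0 = g0 \<Longrightarrow> fD = gD \<Longrightarrow> (\<And>i a b. 0 < i \<Longrightarrow> i < D \<Longrightarrow> a < 2 \<Longrightarrow> b < 2 \<Longrightarrow> f i a b = g i a b) \<Longrightarrow>
   blockdiag_odd D f0 f fD = blockdiag_odd D g0 g gD"
  unfolding blockdiag_odd_def Let_def by (rule cong_mat) auto

lemma diag_eo: assumes D1: "D \<ge> 1" shows "blockdiag_even D (\<lambda>i a b. if a = 0 \<and> b = 0 then d i else 0) =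
   blockdiag_odd D (d 0) (\<lambda>i a b. if a = 1 \<and> b = 1 then d i else 0) 0"
proof (rule eq_matI)
  fix r c assume "r < dim_row (blockdiag_odd D (d 0) (\<lambda>i a b. if a = 1 \<and> b = 1 then d i else 0) 0)"
     "c < dim_col (blockdiag_odd D (d 0) (\<lambda>i a b. if a = 1 \<and> b = 1 then d i else 0) 0)"
  hence r: "r < 2*D" and c: "c < 2*D" by (auto simp: blockdiag_odd_def)
  have L: "blockdiag_even D (\<lambda>i a b. if a = 0 \<and> b = 0 then d i else 0) $$ (r,c) =
     (if r = c \<and> even r then d (r div 2) else 0)"
  proof -
    have B: "r div 2 = c div 2 \<and> r mod 2 = 0 \<and> c mod 2 = 0 \<longleftrightarrow> r = c \<and> even r"
      by (metis dm_eq even_iff_mod_2_eq_zero)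
    show ?thesis using r c B by (auto simp: blockdiag_even_def)
  qed
  have R: "blockdiag_odd D (d 0) (\<lambda>i a b. if a = 1 \<and> b = 1 then d i else 0) 0 $$ (r,c) =
     (if r = c \<and> even r then d (r div 2) else 0)"
  proof (cases "r = c \<and> even r")
    case True
    have j: "Suc r div 2 = r div 2" "Suc r mod 2 = 1" using True by auto
    have "r div 2 < D" using r by auto
    then show ?thesis using True r j by (auto simp: blockdiag_odd_def Let_def)
  next
    case False
    have A: "Suc r div 2 = Suc c div 2 \<Longrightarrow> Suc r mod 2 = 1 \<Longrightarrow> Suc c mod 2 = 1 \<Longrightarrow> r = c \<and> even r"
      using dm_eq[of "Suc r" "Suc c"] by (auto simp: mod_Suc split: if_splits)
    have z: "Suc r div 2 = 0 \<Longrightarrow> Suc c div 2 = 0 \<Longrightarrow> r = c \<and> even r" using sdiv0[of r] sdiv0[of c] by auto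
    have E: "blockdiag_odd D (d 0) (\<lambda>i a b. if a = 1 \<and> b = 1 then d i else 0) 0 $$ (r,c) =
      (if Suc r div 2 = Suc c div 2 then (if Suc r div 2 = 0 then d 0 else if Suc r div 2 = D then 0
        else if Suc r mod 2 = 1 \<and> Suc c mod 2 = 1 then d (Suc r div 2) else 0) else 0)"
      using r c by (simp add: blockdiag_odd_def Let_def)
    show ?thesis unfolding E using A z False by (simp only: if_False if_True split: if_split) metis
  qed
  show "blockdiag_even D (\<lambda>i a b. if a = 0 \<and> b = 0 then d i else 0) $$ (r,c) =
     blockdiag_odd D (d 0) (\<lambda>i a b. if a = 1 \<and> b = 1 then d i else 0) 0 $$ (r,c)"
    using L R by simp
qed (auto simp: blockdiag_odd_def blockdiag_even_def)


lemma qp_add: "q > 0 \<Longrightarrow> qp q (x + y) = qp q x * qp q y"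
  by (simp add: qp_def powr_add)
lemma qp_nz: "q > 0 \<Longrightarrow> qp q x \<noteq> 0"
  by (simp add: qp_def)
lemma qp_nat: "q > 0 \<Longrightarrow> qp q (real n) = of_nat q ^ n"
  by (simp add: qp_def powr_realpow)
lemma qp_neg: "q > 0 \<Longrightarrow> qp q (- x) = inverse (qp q x)"
  by (simp add: qp_def powr_minus)
lemma qp_diff: "q > 0 \<Longrightarrow> qp q (x - y) = qp q x / qp q y"
  by (simp add: qp_def powr_diff)

definition tinv_blk :: "nat \<Rightarrow> real \<Rightarrow> nat \<Rightarrow> nat \<Rightarrow> nat \<Rightarrow> complex" where
  "tinv_blk q e i a b = t_blk q e i a b - (if a = b then qp q (-e/2) - inverse (qp q (-e/2)) else 0)"

lemma two_cases: "(a::nat) < 2 \<Longrightarrow> a = 0 \<or> a = 1" by auto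

lemma t_atoms: assumes "q > 0" shows "qp q (-e/2) = inverse (qp q (e/2))"
  using qp_neg[OF assms, of "e/2"] by simp

lemma t_inv1: assumes q: "q > 0" and ab: "a < 2" "b < 2"
  shows "t_blk q e i a 0 * tinv_blk q e i 0 b + t_blk q e i a 1 * tinv_blk q e i 1 b = (if a = b then 1 else 0)"
proof -
  have nz: "qp q (e/2) \<noteq> 0" using qp_nz[OF q] .
  show ?thesis using two_cases[OF ab(1)] two_cases[OF ab(2)] nz
    unfolding tinv_blk_def t_blk_def entry2_def t_atoms[OF q]
    by (auto simp: field_simps)
qed

lemma t_inv2: assumes q: "q > 0" and ab: "a < 2" "b < 2"
  shows "tinv_blk q e i a 0 * t_blk q e i 0 b + tinv_blk q e i a 1 * t_blk q e i 1 b = (if a = b then 1 else 0)"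
proof -
  have nz: "qp q (e/2) \<noteq> 0" using qp_nz[OF q] .
  show ?thesis using two_cases[OF ab(1)] two_cases[OF ab(2)] nz
    unfolding tinv_blk_def t_blk_def entry2_def t_atoms[OF q]
    by (auto simp: field_simps)
qed

lemma t_quad: assumes q: "q > 0" and ab: "a < 2" "b < 2"
  shows "(t_blk q e i a 0 - (if a = 0 then qp q (-e/2) else 0)) * (t_blk q e i 0 b + (if 0 = b then inverse (qp q (-e/2)) else 0))
       + (t_blk q e i a 1 - (if a = 1 then qp q (-e/2) else 0)) * (t_blk q e i 1 b + (if 1 = b then inverse (qp q (-e/2)) else 0)) = 0"
proof -
  have nz: "qp q (e/2) \<noteq> 0" using qp_nz[OF q] .
  show ?thesis using two_cases[OF ab(1)] two_cases[OF ab(2)] nz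
    unfolding tinv_blk_def t_blk_def entry2_def t_atoms[OF q]
    by (auto simp: field_simps)
qed

definition kp :: "nat \<Rightarrow> nat \<Rightarrow> complex" where "kp q D = \<i> * qp q (- real D/2)"

definition tpinv_blk :: "nat \<Rightarrow> nat \<Rightarrow> nat \<Rightarrow> nat \<Rightarrow> nat \<Rightarrow> complex" where
  "tpinv_blk q D i a b = t'_blk q D i a b - (if a = b then kp q D - inverse (kp q D) else 0)"

lemma tp_atoms: assumes q: "q > 0" and i: "i \<le> D"
  shows "qp q (- real D/2) = inverse (qp q (real D/2))"
    "qp q (real i - real D) = of_nat q ^ i / (qp q (real D/2) * qp q (real D/2))"
    "qp q (real i - real D/2) = of_nat q ^ i / qp q (real D/2)"
    "(of_nat q ^ D :: complex) = qp q (real D/2) * qp q (real D/2)"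
    "(of_nat q ^ (D - i) :: complex) = qp q (real D/2) * qp q (real D/2) / of_nat q ^ i"
    "qp q (real D/2 - real i) = qp q (real D/2) / of_nat q ^ i"
proof -
  have SS: "qp q (real D/2) * qp q (real D/2) = of_nat q ^ D"
    using qp_add[OF q, of "real D/2" "real D/2"] qp_nat[OF q, of D] by simp
  show "qp q (- real D/2) = inverse (qp q (real D/2))" using qp_neg[OF q, of "real D/2"] by simp
  show "qp q (real i - real D) = of_nat q ^ i / (qp q (real D/2) * qp q (real D/2))"
    using qp_diff[OF q, of "real i" "real D"] by (simp add: SS qp_nat[OF q])
  show "qp q (real i - real D/2) = of_nat q ^ i / qp q (real D/2)"
    using qp_diff[OF q, of "real i" "real D/2"] by (simp add: qp_nat[OF q])
  show "(of_nat q ^ D :: complex) = qp q (real D/2) * qp q (real D/2)" using SS by simp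
  have "(of_nat q ^ D :: complex) = of_nat q ^ i * of_nat q ^ (D - i)"
    using i by (simp add: power_add[symmetric])
  then show "(of_nat q ^ (D - i) :: complex) = qp q (real D/2) * qp q (real D/2) / of_nat q ^ i"
    using q SS by (simp add: field_simps)
  show "qp q (real D/2 - real i) = qp q (real D/2) / of_nat q ^ i"
    using qp_diff[OF q, of "real D/2" "real i"] by (simp add: qp_nat[OF q])
qed

lemma tp_inv1: assumes q: "q > 0" and i: "i \<le> D" and ab: "a < 2" "b < 2"
  shows "t'_blk q D i a 0 * tpinv_blk q D i 0 b + t'_blk q D i a 1 * tpinv_blk q D i 1 b = (if a = b then 1 else 0)"
proof -
  have nz: "qp q (real D/2) \<noteq> 0" using qp_nz[OF q] .
  have nz2: "(of_nat q ^ i :: complex) \<noteq> 0" using q by simp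
  show ?thesis using two_cases[OF ab(1)] two_cases[OF ab(2)] nz nz2
    unfolding tpinv_blk_def t'_blk_def entry2_def kp_def tp_atoms[OF q i]
    by (auto simp: field_simps)
qed



lemma tp_inv2: assumes q: "q > 0" and i: "i \<le> D" and ab: "a < 2" "b < 2"
  shows "tpinv_blk q D i a 0 * t'_blk q D i 0 b + tpinv_blk q D i a 1 * t'_blk q D i 1 b = (if a = b then 1 else 0)"
proof -
  have nz: "qp q (real D/2) \<noteq> 0" using qp_nz[OF q] .
  have nz2: "(of_nat q ^ i :: complex) \<noteq> 0" using q by simp
  show ?thesis using two_cases[OF ab(1)] two_cases[OF ab(2)] nz nz2
    unfolding tpinv_blk_def t'_blk_def entry2_def kp_def tp_atoms[OF q i]
    by (auto simp: field_simps)
qed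

lemma u'_atom: assumes q: "q > 0"
  shows "qp q ((real D - e)/2 - real i) = qp q (real D/2) / qp q (e/2) / of_nat q ^ i"
proof -
  have eq: "(real D - e)/2 - real i = (real D/2 - e/2) - real i" by (simp add: field_simps)
  show ?thesis unfolding eq unfolding qp_diff[OF q] qp_nat[OF q] by simp
qed

lemma kp_nz: "q > 0 \<Longrightarrow> kp q D \<noteq> 0"
  by (simp add: kp_def qp_nz)

definition Tpi :: "nat \<Rightarrow> nat \<Rightarrow> complex mat" where
  "Tpi q D = blockdiag_odd D (inverse (kp q D)) (tpinv_blk q D) (inverse (kp q D))"

definition dgv :: "nat \<Rightarrow> nat \<Rightarrow> nat \<Rightarrow> complex" where
  "dgv q D i = - \<i> * qp q (real D/2 - real i)"

lemma frak_t'_eq: "frak_t' q D = blockdiag_odd D (kp q D) (t'_blk q D) (kp q D)"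
  by (simp add: frak_t'_def kp_def)

lemma F1: assumes q: "q > 0" shows "frak_t q D e * blockdiag_even D (tinv_blk q e) = 1\<^sub>m (2*D)"
  unfolding frak_t_def bde_mult bde_one by (rule bde_cong) (rule t_inv1[OF q])
lemma F2: assumes q: "q > 0" shows "blockdiag_even D (tinv_blk q e) * frak_t q D e = 1\<^sub>m (2*D)"
  unfolding frak_t_def bde_mult bde_one by (rule bde_cong) (rule t_inv2[OF q])

lemma F3: assumes q: "q > 0" and D: "D \<ge> 2" shows "frak_t' q D * Tpi q D = 1\<^sub>m (2*D)"
  unfolding frak_t'_eq Tpi_def bdo_mult[OF D] bdo_one
  by (rule bdo_cong) (use kp_nz[OF q] tp_inv1[OF q] in auto)
lemma F4: assumes q: "q > 0" and D: "D \<ge> 2" shows "Tpi q D * frak_t' q D = 1\<^sub>m (2*D)"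
  unfolding frak_t'_eq Tpi_def bdo_mult[OF D] bdo_one
  by (rule bdo_cong) (use kp_nz[OF q] tp_inv2[OF q] in auto)

lemma F5: assumes q: "q > 0"
  shows "(frak_t q D e - qp q (-e/2) \<cdot>\<^sub>m 1\<^sub>m (2*D)) * (frak_t q D e + inverse (qp q (-e/2)) \<cdot>\<^sub>m 1\<^sub>m (2*D)) = 0\<^sub>m (2*D) (2*D)"
  unfolding frak_t_def bde_one bde_smult bde_minus bde_add bde_mult bde_zero
proof (rule bde_cong)
  fix i a b :: nat assume ab: "a < 2" "b < 2"
  have nz: "qp q (e/2) \<noteq> 0" using qp_nz[OF q] .
  show "(t_blk q e i a 0 - qp q (-e/2) * (if a = 0 then 1 else 0)) * (t_blk q e i 0 b + inverse (qp q (-e/2)) * (if 0 = b then 1 else 0)) +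
        (t_blk q e i a 1 - qp q (-e/2) * (if a = 1 then 1 else 0)) * (t_blk q e i 1 b + inverse (qp q (-e/2)) * (if 1 = b then 1 else 0)) = 0"
    using two_cases[OF ab(1)] two_cases[OF ab(2)] nz
    unfolding t_blk_def entry2_def t_atoms[OF q]
    by (auto simp: field_simps)
qed

lemma F6: assumes q: "q > 0" and D: "D \<ge> 2"
  shows "(frak_t' q D - kp q D \<cdot>\<^sub>m 1\<^sub>m (2*D)) * (frak_t' q D + inverse (kp q D) \<cdot>\<^sub>m 1\<^sub>m (2*D)) = 0\<^sub>m (2*D) (2*D)"
  unfolding frak_t'_eq bdo_one bdo_smult bdo_minus bdo_add bdo_mult[OF D] bdo_zero
proof (rule bdo_cong)
  fix i a b :: nat assume i: "0 < i" "i < D" and ab: "a < 2" "b < 2"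
  have nz: "qp q (real D/2) \<noteq> 0" using qp_nz[OF q] .
  have nz2: "(of_nat q ^ i :: complex) \<noteq> 0" using q by simp
  have iD: "i \<le> D" using i by simp
  show "(t'_blk q D i a 0 - kp q D * (if a = 0 then 1 else 0)) * (t'_blk q D i 0 b + inverse (kp q D) * (if 0 = b then 1 else 0)) +
        (t'_blk q D i a 1 - kp q D * (if a = 1 then 1 else 0)) * (t'_blk q D i 1 b + inverse (kp q D) * (if 1 = b then 1 else 0)) = 0"
    using two_cases[OF ab(1)] two_cases[OF ab(2)] nz nz2
    unfolding t'_blk_def entry2_def kp_def tp_atoms[OF q iD]
    by (auto simp: field_simps)
qed (use kp_nz[OF q] in auto)

lemma F7: assumes D: "D \<ge> 2"
  shows "frak_u q D * (frak_u q D + 1\<^sub>m (2*D)) = 0\<^sub>m (2*D) (2*D)"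
  unfolding frak_u_def bdo_one bdo_add bdo_mult[OF D] bdo_zero
proof (rule bdo_cong)
  fix i a b :: nat assume ab: "a < 2" "b < 2"
  show "u_blk q D i a 0 * (u_blk q D i 0 b + (if 0 = b then 1 else 0)) + u_blk q D i a 1 * (u_blk q D i 1 b + (if 1 = b then 1 else 0)) = 0"
    using two_cases[OF ab(1)] two_cases[OF ab(2)]
    unfolding u_blk_def entry2_def by (auto simp: field_simps)
qed auto

lemma F8: assumes q: "q > 0" and D: "D \<ge> 2"
  shows "Tpi q D * (frak_u q D + 1\<^sub>m (2*D)) = blockdiag_even D (\<lambda>i a b. if a = 0 \<and> b = 0 then dgv q D i else 0)"
proof -
  have D1: "D \<ge> 1" using D by simp
  show ?thesis
  unfolding diag_eo[OF D1]
  unfolding Tpi_def frak_u_def bdo_one bdo_add bdo_mult[OF D]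
  apply (rule bdo_cong)
  subgoal
  proof -
    have nz: "qp q (real D/2) \<noteq> 0" using qp_nz[OF q] .
    show ?thesis unfolding dgv_def kp_def tp_atoms(1)[OF q, of 0] using nz by (simp add: field_simps qp_neg[OF q])
  qed
  subgoal by simp
  subgoal for i a b
  proof -
    assume i: "0 < i" "i < D" and ab: "a < 2" "b < 2"
    have nz: "qp q (real D/2) \<noteq> 0" using qp_nz[OF q] .
    have nz2: "(of_nat q ^ i :: complex) \<noteq> 0" using q by simp
    have iD: "i \<le> D" using i by simp
    show ?thesis
      using two_cases[OF ab(1)] two_cases[OF ab(2)] nz nz2
      unfolding tpinv_blk_def t'_blk_def u_blk_def dgv_def entry2_def kp_def tp_atoms[OF q iD]
      by (auto simp: field_simps)
  qed
  done
qed

lemma F9: assumes q: "q > 0"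
  shows "blockdiag_even D (tinv_blk q e) * blockdiag_even D (\<lambda>i a b. if a = 0 \<and> b = 0 then dgv q D i else 0) = frak_u' q D e"
  unfolding frak_u'_def bde_mult
  apply (rule bde_cong)
  subgoal for i a b
  proof -
    assume i: "i < D" and ab: "a < 2" "b < 2"
    have nz: "qp q (real D/2) \<noteq> 0" using qp_nz[OF q] .
    have nz2: "(of_nat q ^ i :: complex) \<noteq> 0" using q by simp
    have nz3: "qp q (e/2) \<noteq> 0" using qp_nz[OF q] .
    have iD: "i \<le> D" using i by simp
    show ?thesis
      using two_cases[OF ab(1)] two_cases[OF ab(2)] nz nz2 nz3
      unfolding tinv_blk_def t_blk_def u'_blk_def dgv_def entry2_def t_atoms[OF q] tp_atoms[OF q iD] u'_atom[OF q]
      by (auto simp: field_simps)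
  qed
  done

lemma F10: "frak_u' q D e * frak_u' q D e = 0\<^sub>m (2*D) (2*D)"
  unfolding frak_u'_def bde_mult bde_zero
  by (rule bde_cong) (auto simp: u'_blk_def entry2_def)


theorem proposition8p7:
  fixes q D :: nat and e :: real
  assumes "prime_power q"
    and "D \<ge> 3"
    and "e \<in> {0, 1/2, 1, 3/2, 2}"
    and "e \<in> {1/2, 3/2} \<Longrightarrow> (\<exists>m::nat. q = m ^ 2)"
  shows "\<exists>Ti Xi. nilDAHA_rep (2*D) (qp q (-e/2)) (\<i> * qp q (- real D/2))
              (frak_t q D e) Ti (frak_u q D) (frak_x q D e) Xi
          \<and> rep_T' (frak_x q D e) Ti = frak_t' q D
          \<and> rep_U' (2*D) Xi (frak_u q D) = frak_u' q D e"
proof -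
  obtain p k where p: "prime p" "k \<ge> 1" "q = p ^ k" using assms(1) unfolding prime_power_def by blast
  have p0: "p \<noteq> 0" using p(1) by auto
  have q: "q > 0" using p(3) p0 by simp
  have D: "D \<ge> 2" using assms(2) by simp
  define T where "T = frak_t q D e"
  define Ti where "Ti = blockdiag_even D (tinv_blk q e)"
  define Tp where "Tp = frak_t' q D"
  define Tpi' where "Tpi' = Tpi q D"
  define U where "U = frak_u q D"
  define dg where "dg = blockdiag_even D (\<lambda>i a b. if a = 0 \<and> b = 0 then dgv q D i else 0)"
  define Xi where "Xi = Ti * Tpi'"
  have cT: "T \<in> carrier_mat (2*D) (2*D)" unfolding T_def frak_t_def by (rule bde_carrier)
  have cTi: "Ti \<in> carrier_mat (2*D) (2*D)" unfolding Ti_def by (rule bde_carrier)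
  have cTp: "Tp \<in> carrier_mat (2*D) (2*D)" unfolding Tp_def frak_t'_def by (rule bdo_carrier)
  have cTpi: "Tpi' \<in> carrier_mat (2*D) (2*D)" unfolding Tpi'_def Tpi_def by (rule bdo_carrier)
  have cU: "U \<in> carrier_mat (2*D) (2*D)" unfolding U_def frak_u_def by (rule bdo_carrier)
  have cU1: "U + 1\<^sub>m (2*D) \<in> carrier_mat (2*D) (2*D)" using cU by simp
  have cdg: "dg \<in> carrier_mat (2*D) (2*D)" unfolding dg_def by (rule bde_carrier)
  have cXi: "Xi \<in> carrier_mat (2*D) (2*D)" unfolding Xi_def using cTi cTpi by simp
  have X: "frak_x q D e = Tp * T" unfolding frak_x_def Tp_def T_def ..
  have cX: "Tp * T \<in> carrier_mat (2*D) (2*D)" using cTp cT by simp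
  have TTi: "T * Ti = 1\<^sub>m (2*D)" unfolding T_def Ti_def by (rule F1[OF q])
  have TiT: "Ti * T = 1\<^sub>m (2*D)" unfolding T_def Ti_def by (rule F2[OF q])
  have TpTpi: "Tp * Tpi' = 1\<^sub>m (2*D)" unfolding Tp_def Tpi'_def by (rule F3[OF q D])
  have TpiTp: "Tpi' * Tp = 1\<^sub>m (2*D)" unfolding Tp_def Tpi'_def by (rule F4[OF q D])
  have XTi: "Tp * T * Ti = Tp"
    using cTp cT cTi TTi by (simp add: assoc_mult_mat[OF cTp cT cTi])
  have XXi: "Tp * T * Xi = 1\<^sub>m (2*D)"
  proof -
    have "Tp * T * Xi = Tp * T * Ti * Tpi'" unfolding Xi_def
      using assoc_mult_mat[OF cX cTi cTpi] by simp
    also have "\<dots> = Tp * Tpi'" using XTi by simp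
    finally show ?thesis using TpTpi by simp
  qed
  have XiX: "Xi * (Tp * T) = 1\<^sub>m (2*D)"
  proof -
    have "Xi * (Tp * T) = Ti * (Tpi' * Tp * T)" unfolding Xi_def
      using cTi cTpi cTp cT by (simp add: assoc_mult_mat[OF cTi cTpi cX] assoc_mult_mat[OF cTpi cTp cT])
    also have "\<dots> = Ti * T" using TpiTp cT by simp
    finally show ?thesis using TiT by simp
  qed
  have XiU: "Xi * (U + 1\<^sub>m (2*D)) = frak_u' q D e"
  proof -
    have "Xi * (U + 1\<^sub>m (2*D)) = Ti * (Tpi' * (U + 1\<^sub>m (2*D)))" unfolding Xi_def
      using assoc_mult_mat[OF cTi cTpi cU1] by simp
    also have "\<dots> = Ti * dg" unfolding Tpi'_def U_def dg_def using F8[OF q D] by simp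
    also have "\<dots> = frak_u' q D e" unfolding Ti_def dg_def by (rule F9[OF q])
    finally show ?thesis .
  qed
  have kp': "\<i> * qp q (- real D/2) = kp q D" by (simp add: kp_def)
  show ?thesis
  proof (intro exI conjI)
    show "rep_T' (frak_x q D e) Ti = frak_t' q D" unfolding rep_T'_def X XTi unfolding Tp_def ..
    show "rep_U' (2*D) Xi (frak_u q D) = frak_u' q D e" unfolding rep_U'_def using XiU U_def by simp
    show "nilDAHA_rep (2*D) (qp q (-e/2)) (\<i> * qp q (- real D/2))
              (frak_t q D e) Ti (frak_u q D) (frak_x q D e) Xi"
      unfolding nilDAHA_rep_def kp' X T_def[symmetric] U_def[symmetric]
    proof (intro conjI)
      show "(Tp * T * Ti - kp q D \<cdot>\<^sub>m 1\<^sub>m (2 * D)) * (Tp * T * Ti + inverse (kp q D) \<cdot>\<^sub>m 1\<^sub>m (2 * D)) = 0\<^sub>m (2 * D) (2 * D)"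
        unfolding XTi unfolding Tp_def by (rule F6[OF q D])
      show "(T - qp q (- e / 2) \<cdot>\<^sub>m 1\<^sub>m (2 * D)) * (T + inverse (qp q (- e / 2)) \<cdot>\<^sub>m 1\<^sub>m (2 * D)) = 0\<^sub>m (2 * D) (2 * D)"
        unfolding T_def by (rule F5[OF q])
      show "U * (U + 1\<^sub>m (2 * D)) = 0\<^sub>m (2 * D) (2 * D)" unfolding U_def by (rule F7[OF D])
      show "Xi * (U + 1\<^sub>m (2 * D)) * (Xi * (U + 1\<^sub>m (2 * D))) = 0\<^sub>m (2 * D) (2 * D)"
        unfolding XiU by (rule F10)
    qed (use cT cTi cU cX cXi TTi TiT XXi XiX in auto)
  qed
qed

end
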